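(* Let $b_\omega$ be a highest weight element of the spinor crystal $B_S$ (i.e. $b_\omega=b_{\Lambda_{n-1}}$ or $b_\omega=b_{\Lambda_n}$). Let $i_1,\dots,i_m\in I$ be such that $\tilde f_{i_m}\cdots\tilde f_{i_2}\tilde f_{i_1}b_\omega\neq0$. Let $\Phi:B(\infty)\hookrightarrow B(\infty)\otimes B_{i_1}\otimes\cdots\otimes B_{i_m}$ be the composition $\Phi=(\Psi_{i_1}\otimes1)\circ\cdots\circ(\Psi_{i_{m-1}}\otimes 1)\circ\Psi_{i_m}$ (first $\Psi_{i_m}:B(\infty)\to B(\infty)\otimes B_{i_m}$, then $\Psi_{i_{m-1}}$ applied to the $B(\infty)$ factor, etc.). Then $$\Phi(\tilde f^*_{i_m}\cdots\tilde f^*_{i_2}\tilde f^*_{i_1}b_\infty)=b_\infty\otimes b_{i_1}(-1)\otimes b_{i_2}(-1)\otimes\cdots\otimes b_{i_m}(-1)$$ and $$\Phi(\tilde f_{i_1}\tilde f_{i_2}\cdots\tilde f_{i_m}b_\infty)=b_\infty\otimes b_{i_1}(-1)\otimes b_{i_2}(-1)\otimes\cdots\otimes b_{i_m}(-1).$$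
   Context: Let $\mathfrak g$ be of type $D_n$ with index set $I=\{1,\dots,n\}$, simple roots $\alpha_j=\epsilon_j-\epsilon_{j+1}$ ($j<n$), $\alpha_n=\epsilon_{n-1}+\epsilon_n$. The spinor crystal $B_S$ is the set of sign vectors $(i_1,\dots,i_n)$ with weight $\frac12\sum i_j\epsilon_j$; for $j<n$, $\tilde f_j$ turns $(i_j,i_{j+1})=(+,-)$ into $(-,+)$ (else $0$), $\tilde e_j$ the reverse; $\tilde f_n$ turns $(i_{n-1},i_n)=(+,+)$ into $(-,-)$ (else $0$), $\tilde e_n$ the reverse; its highest weight elements are $b_{\Lambda_{n-1}}=(+,\dots,+,-)$ and $b_{\Lambda_n}=(+,\dots,+)$. (Generalized) crystals: sets with $\mathrm{wt},\varepsilon_i,\varphi_i\in\mathbb Z\sqcup\{-\infty\}$, $\tilde e_i,\tilde f_i$ satisfying Kashiwara's axioms; tensor product: $\mathrm{wt}$ adds, $\varepsilon_i(a\otimes b)=\max(\varepsilon_i(a),\varepsilon_i(b)-\langle\mathrm{wt}\,a,\alpha_i^\vee\rangle)$, $\varphi_i(a\otimes b)=\max(\varphi_i(b),\varphi_i(a)+\langle\mathrm{wt}\,b,\alpha_i^\vee\rangle)$, $\tilde e_i(a\otimes b)=a\otimes\tilde e_ib$ if $\varepsilon_i(b)>\varphi_i(a)$, else $\tilde e_ia\otimes b$; $\tilde f_i(a\otimes b)=a\otimes\tilde f_ib$ if $\varepsilon_i(b)\ge\varphi_i(a)$, else $\tilde f_ia\otimes b$. $B(\infty)$ is Kashiwara's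 crystal of $U_q^-(\mathfrak g)$ with weight-$0$ element $b_\infty$, $\varepsilon_i(b)=\max\{k:\tilde e_i^kb\ne0\}$, $\varphi_i(b)=\varepsilon_i(b)+\langle\alpha_i^\vee,\mathrm{wt}\, b\rangle$; $*$ is Kashiwara's involution on $B(\infty)$ and $\tilde f_i^*(b)=(\tilde f_i(b^* ))^*$. For $i\in I$, $B_i=\{b_i(k):k\in\mathbb Z\}$ with $\mathrm{wt}(b_i(k))=k\alpha_i$, $\varphi_i(b_i(k))=k$, $\varepsilon_i(b_i(k))=-k$, $\varphi_j=\varepsilon_j=-\infty$ for $j\neq i$, $\tilde e_ib_i(k)=b_i(k+1)$, $\tilde f_ib_i(k)=b_i(k-1)$, $\tilde e_j=\tilde f_j=0$ for $j\ne i$. $\Psi_i:B(\infty)\hookrightarrow B(\infty)\otimes B_i$ is Kashiwara's unique strict crystal embedding with $\Psi_i(b_\infty)=b_\infty\otimes b_i(0)$. *)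

theory Defs
  imports Main
begin

text \<open>Weights of B(infinity) and of B_i lie in the root lattice Q;
 they are represented by their coefficient functions with respect to the simple roots
 alpha_1, ..., alpha_n (a function nat => int, zero outside {1..n}).\<close>

definition adjD :: "nat \<Rightarrow> nat \<Rightarrow> nat \<Rightarrow> bool" where
  "adjD n i j \<longleftrightarrow> i \<in> {1..n} \<and> j \<in> {1..n} \<and>
     ((i + 1 = j \<and> j \<le> n - 1) \<or> (j + 1 = i \<and> i \<le> n - 1) \<or>
      (i + 2 = n \<and> j = n) \<or> (j + 2 = n \<and> i = n))"

definition cartanD :: "nat \<Rightarrow> nat \<Rightarrow> nat \<Rightarrow> int" where
  "cartanD n i j = (if i = j then 2 else if adjD n i j then -1 else 0)"

definition pairD :: "nat \<Rightarrow> nat \<Rightarrow> (nat \<Rightarrow> int) \<Rightarrow> int" where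
  "pairD n i mu = (\<Sum>j\<in>{1..n}. cartanD n i j * mu j)"

definition add_root :: "(nat \<Rightarrow> int) \<Rightarrow> int \<Rightarrow> nat \<Rightarrow> (nat \<Rightarrow> int)" where
  "add_root mu k i = (\<lambda>j. mu j + (if j = i then k else 0))"

section \<open>Iteration of partial crystal operators (None = 0)\<close>

definition iter_opt :: "('a \<Rightarrow> 'a option) \<Rightarrow> nat \<Rightarrow> 'a \<Rightarrow> 'a option" where
  "iter_opt g k x = ((\<lambda>y. Option.bind y g) ^^ k) (Some x)"

definition int_crystal ::
  "nat \<Rightarrow> ('b \<Rightarrow> nat \<Rightarrow> int) \<Rightarrow> (nat \<Rightarrow> 'b \<Rightarrow> int) \<Rightarrow> (nat \<Rightarrow> 'b \<Rightarrow> int)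
   \<Rightarrow> (nat \<Rightarrow> 'b \<Rightarrow> 'b option) \<Rightarrow> (nat \<Rightarrow> 'b \<Rightarrow> 'b option) \<Rightarrow> bool" where
  "int_crystal n wt eps phi e f \<longleftrightarrow>
     (\<forall>i\<in>{1..n}. \<forall>b. phi i b = eps i b + pairD n i (wt b)) \<and>
     (\<forall>i\<in>{1..n}. \<forall>b b'. e i b = Some b' \<longrightarrow>
        wt b' = add_root (wt b) 1 i \<and> eps i b' = eps i b - 1 \<and> phi i b' = phi i b + 1) \<and>
     (\<forall>i\<in>{1..n}. \<forall>b b'. f i b = Some b' \<longrightarrow>
        wt b' = add_root (wt b) (-1) i \<and> eps i b' = eps i b + 1 \<and> phi i b' = phi i b - 1) \<and>
     (\<forall>i\<in>{1..n}. \<forall>b b'. f i b = Some b' \<longleftrightarrow> e i b' = Some b)"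

section \<open>The tensor product B \<otimes> B_i; b \<otimes> b_i(k) is represented by (b, k)\<close>

definition tens_wt :: "('b \<Rightarrow> nat \<Rightarrow> int) \<Rightarrow> nat \<Rightarrow> 'b \<times> int \<Rightarrow> nat \<Rightarrow> int" where
  "tens_wt wt i x = add_root (wt (fst x)) (snd x) i"

text \<open>epsilon_j(a \<otimes> b_i(k)) = max(eps_j a, eps_j(b_i(k)) - <wt a, alpha_j^vee>), where
  eps_j(b_i(k)) = -infinity for j \<noteq> i.\<close>
definition tens_eps :: "nat \<Rightarrow> ('b \<Rightarrow> nat \<Rightarrow> int) \<Rightarrow> (nat \<Rightarrow> 'b \<Rightarrow> int) \<Rightarrow> nat \<Rightarrow> nat \<Rightarrow> 'b \<times> int \<Rightarrow> int" where
  "tens_eps n wt eps i j x =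
     (if j = i then max (eps i (fst x)) (- snd x - pairD n i (wt (fst x))) else eps j (fst x))"

text \<open>phi_j(a \<otimes> b_i(k)) = max(phi_j(b_i(k)), phi_j a + <wt b_i(k), alpha_j^vee>).\<close>
definition tens_phi :: "nat \<Rightarrow> (nat \<Rightarrow> 'b \<Rightarrow> int) \<Rightarrow> nat \<Rightarrow> nat \<Rightarrow> 'b \<times> int \<Rightarrow> int" where
  "tens_phi n phi i j x =
     (if j = i then max (snd x) (phi i (fst x) + 2 * snd x)
      else phi j (fst x) + snd x * cartanD n j i)"

definition tens_e :: "(nat \<Rightarrow> 'b \<Rightarrow> int) \<Rightarrow> (nat \<Rightarrow> 'b \<Rightarrow> 'b option) \<Rightarrow> nat \<Rightarrow> nat \<Rightarrow> 'b \<times> int \<Rightarrow> ('b \<times> int) option" where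
  "tens_e phi e i j x =
     (if j = i \<and> - snd x > phi i (fst x) then Some (fst x, snd x + 1)
      else map_option (\<lambda>a. (a, snd x)) (e j (fst x)))"

definition tens_f :: "(nat \<Rightarrow> 'b \<Rightarrow> int) \<Rightarrow> (nat \<Rightarrow> 'b \<Rightarrow> 'b option) \<Rightarrow> nat \<Rightarrow> nat \<Rightarrow> 'b \<times> int \<Rightarrow> ('b \<times> int) option" where
  "tens_f phi f i j x =
     (if j = i \<and> - snd x \<ge> phi i (fst x) then Some (fst x, snd x - 1)
      else map_option (\<lambda>a. (a, snd x)) (f j (fst x)))"

definition strict_emb ::
  "nat \<Rightarrow> ('b \<Rightarrow> nat \<Rightarrow> int) \<Rightarrow> (nat \<Rightarrow> 'b \<Rightarrow> int) \<Rightarrow> (nat \<Rightarrow> 'b \<Rightarrow> int)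
   \<Rightarrow> (nat \<Rightarrow> 'b \<Rightarrow> 'b option) \<Rightarrow> (nat \<Rightarrow> 'b \<Rightarrow> 'b option) \<Rightarrow> nat \<Rightarrow> ('b \<Rightarrow> 'b \<times> int) \<Rightarrow> bool" where
  "strict_emb n wt eps phi e f i Psi \<longleftrightarrow>
     inj Psi \<and>
     (\<forall>b. tens_wt wt i (Psi b) = wt b) \<and>
     (\<forall>j\<in>{1..n}. \<forall>b.
        tens_eps n wt eps i j (Psi b) = eps j b \<and>
        tens_phi n phi i j (Psi b) = phi j b \<and>
        tens_e phi e i j (Psi b) = map_option Psi (e j b) \<and>
        tens_f phi f i j (Psi b) = map_option Psi (f j b))"

text \<open>(B, b_inf, eps, phi, e, f) satisfies the Kashiwara--Saito characterization of B(infinity)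
  (Kashiwara--Saito 1997, Prop. 3.2.3), with Psi_i the strict embeddings B \<hookrightarrow> B \<otimes> B_i,
  Psi_i(b_inf) = b_inf \<otimes> b_i(0); eps_i(b) = max{k. e_i^k b \<noteq> 0}; and star is an
  involution fixing b_inf with Kashiwara's formula
  Psi_i(b) = (e_i^* )^{eps_i^*(b)} b \<otimes> b_i(-eps_i^*(b)),  eps_i^*(b) = eps_i(b^*),
  which (given Psi_i) determines star uniquely; hence these data are exactly
  (B(infinity), *, Psi_i) up to isomorphism.\<close>
definition is_Binf_D ::
  "nat \<Rightarrow> ('b \<Rightarrow> nat \<Rightarrow> int) \<Rightarrow> (nat \<Rightarrow> 'b \<Rightarrow> int) \<Rightarrow> (nat \<Rightarrow> 'b \<Rightarrow> int)
   \<Rightarrow> (nat \<Rightarrow> 'b \<Rightarrow> 'b option) \<Rightarrow> (nat \<Rightarrow> 'b \<Rightarrow> 'b option) \<Rightarrow> 'b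
   \<Rightarrow> ('b \<Rightarrow> 'b) \<Rightarrow> (nat \<Rightarrow> 'b \<Rightarrow> 'b \<times> int) \<Rightarrow> bool" where
  "is_Binf_D n wt eps phi e f binf star Psi \<longleftrightarrow>
     int_crystal n wt eps phi e f \<and>
     (\<forall>b. \<forall>j. j \<notin> {1..n} \<longrightarrow> wt b j = 0) \<and>
     (\<forall>b. \<forall>j. wt b j \<le> 0) \<and>
     (\<forall>b. wt b = (\<lambda>_. 0) \<longleftrightarrow> b = binf) \<and>
     (\<forall>i\<in>{1..n}. eps i binf = 0) \<and>
     (\<forall>i\<in>{1..n}. \<forall>b. eps i b \<ge> 0 \<and> iter_opt (e i) (nat (eps i b)) b \<noteq> None
                        \<and> iter_opt (e i) (nat (eps i b) + 1) b = None) \<and>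
     (\<forall>i\<in>{1..n}. strict_emb n wt eps phi e f i (Psi i) \<and> Psi i binf = (binf, 0)) \<and>
     (\<forall>i\<in>{1..n}. \<forall>b. snd (Psi i b) \<le> 0) \<and>
     (\<forall>b. b \<noteq> binf \<longrightarrow> (\<exists>i\<in>{1..n}. snd (Psi i b) < 0)) \<and>
     (\<forall>b. star (star b) = b) \<and> star binf = binf \<and>
     (\<forall>i\<in>{1..n}. \<forall>b. snd (Psi i b) = - eps i (star b) \<and>
        iter_opt (f i) (nat (eps i (star b))) (star (fst (Psi i b))) = Some (star b))"

definition fstar :: "(nat \<Rightarrow> 'b \<Rightarrow> 'b option) \<Rightarrow> ('b \<Rightarrow> 'b) \<Rightarrow> nat \<Rightarrow> 'b \<Rightarrow> 'b option" where
  "fstar f star i b = map_option star (f i (star b))"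

text \<open>f^*_{i_m} ... f^*_{i_1} b  (f^*_{i_1} applied first)\<close>
definition fstar_seq :: "(nat \<Rightarrow> 'b \<Rightarrow> 'b option) \<Rightarrow> ('b \<Rightarrow> 'b) \<Rightarrow> nat list \<Rightarrow> 'b \<Rightarrow> 'b option" where
  "fstar_seq f star js b = foldl (\<lambda>x i. Option.bind x (fstar f star i)) (Some b) js"

text \<open>f_{i_1} f_{i_2} ... f_{i_m} b  (f_{i_m} applied first)\<close>
definition f_seq :: "(nat \<Rightarrow> 'b \<Rightarrow> 'b option) \<Rightarrow> nat list \<Rightarrow> 'b \<Rightarrow> 'b option" where
  "f_seq f js b = foldr (\<lambda>i x. Option.bind x (f i)) js (Some b)"

text \<open>Phi = (Psi_{i_1} \<otimes> 1) o ... o (Psi_{i_{m-1}} \<otimes> 1) o Psi_{i_m};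
  Phi b = (b', [k_1,...,k_m]) stands for b' \<otimes> b_{i_1}(k_1) \<otimes> ... \<otimes> b_{i_m}(k_m).\<close>
fun Phi :: "(nat \<Rightarrow> 'b \<Rightarrow> 'b \<times> int) \<Rightarrow> nat list \<Rightarrow> 'b \<Rightarrow> 'b \<times> int list" where
  "Phi Psi [] b = (b, [])"
| "Phi Psi (i # js) b = (let (b1, ks) = Phi Psi js b; (b2, k) = Psi i b1 in (b2, k # ks))"

section \<open>Spinor crystal B_S: sign vectors as bool lists of length n (True = +)\<close>

definition spin_f :: "nat \<Rightarrow> nat \<Rightarrow> bool list \<Rightarrow> bool list option" where
  "spin_f n i v =
     (if 1 \<le> i \<and> i < n then
        (if v ! (i - 1) \<and> \<not> v ! i then Some (v[i - 1 := False, i := True]) else None)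
      else if i = n then
        (if v ! (n - 2) \<and> v ! (n - 1) then Some (v[n - 2 := False, n - 1 := False]) else None)
      else None)"

text \<open>f_{i_m} ... f_{i_1} v  (f_{i_1} applied first)\<close>
definition spin_fseq :: "nat \<Rightarrow> nat list \<Rightarrow> bool list \<Rightarrow> bool list option" where
  "spin_fseq n js v = foldl (\<lambda>x i. Option.bind x (spin_f n i)) (Some v) js"

end

theory Submission imports Defs begin

definition sp :: "nat \<Rightarrow> nat \<Rightarrow> bool list \<Rightarrow> int" where
  "sp n i v = (if i < n then (if v!(i-1) = v!i then 0 else if v!(i-1) then 1 else -1)
     else (if v!(n-2) \<noteq> v!(n-1) then 0 else if v!(n-2) then 1 else -1))"

lemma S2a: "n \<ge> 4 \<Longrightarrow> length v = n \<Longrightarrow> i \<in> {1..n} \<Longrightarrow> 1 \<le> j \<Longrightarrow> j < n \<Longrightarrow> v!(j-1) \<Longrightarrow> \<not> v!j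
  \<Longrightarrow> sp n i (v[j-1 := False, j := True]) = sp n i v - cartanD n i j"
proof -
  assume h: "n \<ge> 4" "length v = n" "i \<in> {1..n}" "1 \<le> j" "j < n" "v!(j-1)" "\<not> v!j"
  obtain c where c: "j = Suc c" using h(4) by (cases j) auto
  obtain m where m: "n = Suc (Suc m)" using h(1) by (cases n; cases "n - 1") auto
  have vc: "v!c" "\<not> v!(Suc c)" using h c by auto
  show ?thesis
  proof (cases "i < n")
    case True
    obtain a where a: "i = Suc a" using h(3) by (cases i) auto
    show ?thesis using h vc True unfolding a c m
      by (cases "a = c"; cases "a = Suc c"; cases "Suc a = c")
         (auto simp: sp_def cartanD_def adjD_def nth_list_update)
  next
    case False
    then have i: "i = Suc (Suc m)" using h m by auto
    show ?thesis using h vc unfolding i c m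
      by (cases "c = m"; cases "Suc c = m")
         (auto simp: sp_def cartanD_def adjD_def nth_list_update)
  qed
qed

lemma S2b: "n \<ge> 4 \<Longrightarrow> length v = n \<Longrightarrow> i \<in> {1..n} \<Longrightarrow> v!(n-2) \<Longrightarrow> v!(n-1)
  \<Longrightarrow> sp n i (v[n-2 := False, n-1 := False]) = sp n i v - cartanD n i n"
proof -
  assume h: "n \<ge> 4" "length v = n" "i \<in> {1..n}" "v!(n-2)" "v!(n-1)"
  obtain m where m: "n = Suc (Suc m)" using h(1) by (cases n; cases "n - 1") auto
  have vc: "v!m" "v!(Suc m)" using h m by auto
  show ?thesis
  proof (cases "i < n")
    case True
    obtain a where a: "i = Suc a" using h(3) by (cases i) auto
    show ?thesis using h vc True unfolding a m
      by (cases "a = m"; cases "Suc a = m"; cases "Suc (Suc a) = m")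
         (auto simp: sp_def cartanD_def adjD_def nth_list_update)
  next
    case False
    then have i: "i = Suc (Suc m)" using h m by auto
    show ?thesis using h vc unfolding i m
      by (auto simp: sp_def cartanD_def adjD_def nth_list_update)
  qed
qed

lemma S1: "n \<ge> 4 \<Longrightarrow> i \<in> {1..n} \<Longrightarrow> spin_f n i v \<noteq> None \<Longrightarrow> sp n i v = 1"
  by (auto simp: spin_f_def sp_def split: if_splits)

lemma S2: "n \<ge> 4 \<Longrightarrow> length v = n \<Longrightarrow> i \<in> {1..n} \<Longrightarrow> j \<in> {1..n} \<Longrightarrow> spin_f n j v = Some v'
  \<Longrightarrow> length v' = n \<and> sp n i v' = sp n i v - cartanD n i j"
  using S2a[of n v i j] S2b[of n v i]
  by (auto simp: spin_f_def split: if_splits)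

lemma foldl_None: "foldl (\<lambda>x i. Option.bind x (g i)) None q = None"
  by (induction q) auto

lemma spin_fseq_Nil: "spin_fseq n [] v = Some v"
  by (simp add: spin_fseq_def)

lemma spin_fseq_Cons: "spin_fseq n (j#q) v = Option.bind (spin_f n j v) (spin_fseq n q)"
  by (cases "spin_f n j v") (auto simp: spin_fseq_def foldl_None)

lemma spin_fseq_append: "spin_fseq n (a@b) v = Option.bind (spin_fseq n a v) (spin_fseq n b)"
proof (induction a arbitrary: v)
  case Nil then show ?case by (simp add: spin_fseq_Nil)
next
  case (Cons x a) then show ?case
    by (cases "spin_f n x v") (auto simp: spin_fseq_Cons)
qed

lemma S3: "n \<ge> 4 \<Longrightarrow> length v = n \<Longrightarrow> set p \<subseteq> {1..n} \<Longrightarrow> spin_fseq n p v = Some w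
  \<Longrightarrow> length w = n \<and> (\<forall>i\<in>{1..n}. sp n i w = sp n i v - sum_list (map (cartanD n i) p))"
proof (induction p arbitrary: v)
  case Nil then show ?case by (simp add: spin_fseq_Nil)
next
  case (Cons j p)
  then obtain v' where v': "spin_f n j v = Some v'" "spin_fseq n p v' = Some w"
    by (cases "spin_f n j v") (auto simp: spin_fseq_Cons)
  have "length v' = n \<and> (\<forall>i\<in>{1..n}. sp n i v' = sp n i v - cartanD n i j)"
    using S2[OF Cons.prems(1,2) _ _ v'(1)] Cons.prems(3) by auto
  moreover have "length w = n \<and> (\<forall>i\<in>{1..n}. sp n i w = sp n i v' - sum_list (map (cartanD n i) p))"
    using Cons.IH[of v'] Cons.prems v' calculation by auto
  ultimately show ?case by auto
qed

lemma K: assumes "n \<ge> 4" "length v = n" "set (p @ i # q @ i # r) \<subseteq> {1..n}"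
    "spin_fseq n (p @ i # q @ i # r) v \<noteq> None"
  shows "sum_list (map (cartanD n i) q) = -2"
proof -
  obtain v1 where v1: "spin_fseq n p v = Some v1" and r1: "spin_fseq n (i # q @ i # r) v1 \<noteq> None"
    using assms(4) by (cases "spin_fseq n p v") (auto simp: spin_fseq_append)
  obtain v2 where v2: "spin_f n i v1 = Some v2" and r2: "spin_fseq n (q @ i # r) v2 \<noteq> None"
    using r1 by (cases "spin_f n i v1") (auto simp: spin_fseq_Cons)
  obtain v3 where v3: "spin_fseq n q v2 = Some v3" and r3: "spin_fseq n (i # r) v3 \<noteq> None"
    using r2 by (cases "spin_fseq n q v2") (auto simp: spin_fseq_append)
  have r4: "spin_f n i v3 \<noteq> None" using r3 by (cases "spin_f n i v3") (auto simp: spin_fseq_Cons)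
  have i: "i \<in> {1..n}" using assms(3) by auto
  have l1: "length v1 = n" using S3[OF assms(1,2) _ v1] assms(3) by auto
  have s2: "length v2 = n \<and> sp n i v2 = sp n i v1 - 2"
    using S2[OF assms(1) l1 i i v2] by (simp add: cartanD_def)
  have s3: "sp n i v3 = sp n i v2 - sum_list (map (cartanD n i) q)"
    using S3[OF assms(1) _ _ v3] s2 assms(3) i by auto
  show ?thesis using S1[OF assms(1) i, of v1] S1[OF assms(1) i r4] s2 s3 v2 by auto
qed

lemma pairD_add_root: "j \<in> {1..n} \<Longrightarrow> pairD n i (add_root mu k j) = pairD n i mu + k * cartanD n i j"
proof -
  assume j: "j \<in> {1..n}"
  have "(\<lambda>l. cartanD n i l * add_root mu k j l) = (\<lambda>l. cartanD n i l * mu l + (if l = j then cartanD n i l * k else 0))"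
    by (auto simp: add_root_def distrib_left)
  then have "pairD n i (add_root mu k j) = (\<Sum>l\<in>{1..n}. cartanD n i l * mu l) + (\<Sum>l\<in>{1..n}. (if l = j then cartanD n i l * k else 0))"
    unfolding pairD_def by (simp only: sum.distrib)
  also have "(\<Sum>l\<in>{1..n}. (if l = j then cartanD n i l * k else 0)) = cartanD n i j * k"
    using j by (simp only: sum.delta finite_atLeastAtMost if_True)
  finally show ?thesis by (simp add: pairD_def mult.commute)
qed

lemma pairD_0: "pairD n i (\<lambda>_. 0) = 0"
  by (simp add: pairD_def)

lemma sum_add_root: "j \<in> {1..n} \<Longrightarrow> (\<Sum>l\<in>{1..n}. add_root mu k j l) = (\<Sum>l\<in>{1..n}. mu l) + k"
  by (simp add: add_root_def sum.distrib)

lemma Phi_snoc: "Phi Psi (xs @ [i]) b =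
   (fst (Phi Psi xs (fst (Psi i b))), snd (Phi Psi xs (fst (Psi i b))) @ [snd (Psi i b)])"
  by (induction xs) (auto split: prod.splits)

lemma iter_opt_1: "iter_opt g 1 x = g x"
  by (simp add: iter_opt_def)

locale BD =
  fixes n :: nat and wt :: "'b \<Rightarrow> nat \<Rightarrow> int"
    and eps phi :: "nat \<Rightarrow> 'b \<Rightarrow> int"
    and e f :: "nat \<Rightarrow> 'b \<Rightarrow> 'b option"
    and binf :: 'b and star :: "'b \<Rightarrow> 'b" and Psi :: "nat \<Rightarrow> 'b \<Rightarrow> 'b \<times> int"
  assumes B: "is_Binf_D n wt eps phi e f binf star Psi"
    and n4: "n \<ge> 4"
begin

lemma phi_eq: "i \<in> {1..n} \<Longrightarrow> phi i b = eps i b + pairD n i (wt b)"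
  using B unfolding is_Binf_D_def int_crystal_def by (elim conjE) blast

lemma f_prop: "i \<in> {1..n} \<Longrightarrow> f i b = Some b' \<Longrightarrow> wt b' = add_root (wt b) (-1) i \<and> eps i b' = eps i b + 1"
  using B unfolding is_Binf_D_def int_crystal_def by (elim conjE) blast

lemma f_inj: "i \<in> {1..n} \<Longrightarrow> f i b = Some c \<Longrightarrow> f i b' = Some c \<Longrightarrow> b = b'"
proof -
  assume a: "i \<in> {1..n}" "f i b = Some c" "f i b' = Some c"
  have "\<forall>i\<in>{1..n}. \<forall>b b'. f i b = Some b' \<longleftrightarrow> e i b' = Some b"
    using B unfolding is_Binf_D_def int_crystal_def by (elim conjE) blast
  then have "e i c = Some b" "e i c = Some b'" using a by auto
  then show "b = b'" by simp
qed

lemma wt_binf: "wt binf = (\<lambda>_. 0)"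
  using B unfolding is_Binf_D_def by (elim conjE) blast

lemma wt_le: "wt b j \<le> 0"
  using B unfolding is_Binf_D_def by (elim conjE) blast

lemma eps_binf: "i \<in> {1..n} \<Longrightarrow> eps i binf = 0"
  using B unfolding is_Binf_D_def by (elim conjE) blast

lemma eps_ge: "i \<in> {1..n} \<Longrightarrow> eps i b \<ge> 0"
  using B unfolding is_Binf_D_def by (elim conjE) blast

lemma phi_binf: "i \<in> {1..n} \<Longrightarrow> phi i binf = 0"
  by (simp add: phi_eq eps_binf wt_binf pairD_0)

lemma Psi_binf: "i \<in> {1..n} \<Longrightarrow> Psi i binf = (binf, 0)"
  using B unfolding is_Binf_D_def by (elim conjE) blast

lemma se: "i \<in> {1..n} \<Longrightarrow> strict_emb n wt eps phi e f i (Psi i)"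
  using B unfolding is_Binf_D_def by (elim conjE) blast

lemma Psi_wt: "i \<in> {1..n} \<Longrightarrow> tens_wt wt i (Psi i b) = wt b"
  using se by (auto simp: strict_emb_def)

lemma Psi_eps: "i \<in> {1..n} \<Longrightarrow> j \<in> {1..n} \<Longrightarrow> tens_eps n wt eps i j (Psi i b) = eps j b"
  using se by (auto simp: strict_emb_def)

lemma Psi_f: "i \<in> {1..n} \<Longrightarrow> j \<in> {1..n} \<Longrightarrow> tens_f phi f i j (Psi i b) = map_option (Psi i) (f j b)"
  using se by (auto simp: strict_emb_def)

lemma exists_neg: "b \<noteq> binf \<Longrightarrow> \<exists>i\<in>{1..n}. snd (Psi i b) < 0"
  using B unfolding is_Binf_D_def by (elim conjE) blast

lemma star_star: "star (star b) = b"
  using B unfolding is_Binf_D_def by (elim conjE) blast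

lemma star_binf: "star binf = binf"
  using B unfolding is_Binf_D_def by (elim conjE) blast

lemma Psi_star: "i \<in> {1..n} \<Longrightarrow> snd (Psi i b) = - eps i (star b) \<and>
        iter_opt (f i) (nat (eps i (star b))) (star (fst (Psi i b))) = Some (star b)"
  using B unfolding is_Binf_D_def by (elim conjE) blast

lemma f_tot: "i \<in> {1..n} \<Longrightarrow> f i b \<noteq> None"
proof (induction "nat (- (\<Sum>j\<in>{1..n}. wt b j))" arbitrary: b rule: less_induct)
  case less
  show ?case
  proof (cases "b = binf")
    case True
    have "tens_f phi f i i (Psi i binf) = Some (binf, -1)"
      using less.prems by (simp add: Psi_binf phi_binf tens_f_def)
    then show ?thesis using Psi_f[OF less.prems less.prems, of binf] True by auto
  next
    case False
    then obtain j where j: "j \<in> {1..n}" "snd (Psi j b) < 0" using exists_neg[OF False] by blast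
    obtain b' k where bk: "Psi j b = (b', k)" by (cases "Psi j b")
    have w: "wt b = add_root (wt b') k j" using Psi_wt[OF j(1), of b] bk by (simp add: tens_wt_def)
    have s: "(\<Sum>l\<in>{1..n}. wt b l) = (\<Sum>l\<in>{1..n}. wt b' l) + k"
      using w sum_add_root[OF j(1)] by simp
    have "(\<Sum>l\<in>{1..n}. wt b' l) \<le> 0" by (intro sum_nonpos) (simp add: wt_le)
    then have "nat (- (\<Sum>l\<in>{1..n}. wt b' l)) < nat (- (\<Sum>l\<in>{1..n}. wt b l))"
      using s j(2) bk by simp
    then have "f i b' \<noteq> None" using less.hyps less.prems by blast
    then have "tens_f phi f j i (Psi j b) \<noteq> None" using bk by (simp add: tens_f_def)
    then show ?thesis using Psi_f[OF j(1) less.prems] by auto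
  qed
qed

lemma f_Some: "i \<in> {1..n} \<Longrightarrow> f i b = Some (the (f i b))"
  using f_tot by auto

definition Dt :: "nat list \<Rightarrow> 'b" where
  "Dt p = foldl (\<lambda>b j. the (f j b)) binf p"

lemma Dt_Nil: "Dt [] = binf" by (simp add: Dt_def)
lemma Dt_snoc: "Dt (p @ [j]) = the (f j (Dt p))" by (simp add: Dt_def)

lemma pair_Dt: "i \<in> {1..n} \<Longrightarrow> set q \<subseteq> {1..n} \<Longrightarrow>
   pairD n i (wt (Dt q)) = - sum_list (map (cartanD n i) q)"
proof (induction q rule: rev_induct)
  case Nil then show ?case by (simp add: Dt_Nil wt_binf pairD_0)
next
  case (snoc j q)
  have j: "j \<in> {1..n}" using snoc.prems by auto
  have "wt (Dt (q @ [j])) = add_root (wt (Dt q)) (-1) j"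
    using f_prop[OF j f_Some[OF j]] by (simp add: Dt_snoc)
  then show ?case using snoc pairD_add_root[OF j] by simp
qed

lemma Psi_step: "i \<in> {1..n} \<Longrightarrow> set q \<subseteq> {1..n} \<Longrightarrow>
   (\<forall>a b. q = a @ i # b \<longrightarrow> sum_list (map (cartanD n i) a) \<le> -2) \<Longrightarrow>
   Psi i (Dt (i # q)) = (Dt q, -1)"
proof (induction q rule: rev_induct)
  case Nil
  have "tens_f phi f i i (Psi i binf) = Some (binf, -1)"
    using Nil.prems by (simp add: Psi_binf phi_binf tens_f_def)
  then have "map_option (Psi i) (f i binf) = Some (binf, -1)" using Psi_f[OF Nil(1) Nil(1)] by simp
  then show ?case using Dt_snoc[of "[]" i] by (auto simp: Dt_Nil)
next
  case (snoc j q)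
  have j: "j \<in> {1..n}" using snoc.prems by auto
  have c: "\<forall>a b. q = a @ i # b \<longrightarrow> sum_list (map (cartanD n i) a) \<le> -2"
  proof (intro allI impI)
    fix a b assume "q = a @ i # b"
    then have "q @ [j] = a @ i # (b @ [j])" by simp
    then show "sum_list (map (cartanD n i) a) \<le> -2" using snoc.prems(3) by blast
  qed
  have IH: "Psi i (Dt (i # q)) = (Dt q, -1)" using snoc c by auto
  have "tens_f phi f i j (Dt q, -1) = Some (Dt (q @ [j]), -1)"
  proof (cases "j = i")
    case True
    have "sum_list (map (cartanD n i) q) \<le> -2" using snoc.prems(3) True by auto
    moreover have "set q \<subseteq> {1..n}" using snoc.prems(2) by simp
    ultimately have "phi i (Dt q) > 1"
      using phi_eq[OF snoc.prems(1), of "Dt q"] pair_Dt[OF snoc.prems(1), of q] eps_ge[OF snoc.prems(1), of "Dt q"]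
      by linarith
    then show ?thesis using True f_Some[OF j, of "Dt q"] by (simp add: tens_f_def Dt_snoc)
  next
    case False
    then show ?thesis using f_Some[OF j, of "Dt q"] by (simp add: tens_f_def Dt_snoc)
  qed
  moreover have "tens_f phi f i j (Dt q, -1) = map_option (Psi i) (f j (Dt (i # q)))"
    using Psi_f[OF snoc.prems(1) j, of "Dt (i # q)"] IH by simp
  ultimately show ?case using Dt_snoc[of "i # q" j] by auto
qed

lemma lemA: "length v = n \<Longrightarrow> set (p @ [i]) \<subseteq> {1..n} \<Longrightarrow> spin_fseq n (p @ [i]) v \<noteq> None
   \<Longrightarrow> eps i (Dt p) = 0"
proof (induction p arbitrary: v)
  case Nil then show ?case by (simp add: Dt_Nil eps_binf)
next
  case (Cons j q)
  have j: "j \<in> {1..n}" and i: "i \<in> {1..n}" using Cons.prems by auto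
  obtain v' where v': "spin_f n j v = Some v'" and r: "spin_fseq n (q @ [i]) v' \<noteq> None"
    using Cons.prems(3) by (cases "spin_f n j v") (auto simp: spin_fseq_Cons)
  have lv: "length v' = n" using S2[OF n4 Cons.prems(1) j j v'] by simp
  have IH: "eps i (Dt q) = 0" using Cons.IH[OF lv _ r] Cons.prems(2) by auto
  have cond: "\<forall>a b. q = a @ j # b \<longrightarrow> sum_list (map (cartanD n j) a) \<le> -2"
  proof (intro allI impI)
    fix a b assume "q = a @ j # b"
    then show "sum_list (map (cartanD n j) a) \<le> -2"
      using K[OF n4 Cons.prems(1), of "[]" j a "b @ [i]"] Cons.prems(2,3) by simp
  qed
  have P: "Psi j (Dt (j # q)) = (Dt q, -1)" using Psi_step[OF j _ cond] Cons.prems(2) by simp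
  have E: "eps i (Dt (j # q)) = tens_eps n wt eps j i (Dt q, -1)"
    using Psi_eps[OF j i, of "Dt (j # q)"] P by simp
  show ?case
  proof (cases "i = j")
    case True
    have "sum_list (map (cartanD n i) q) = -2"
      using K[OF n4 Cons.prems(1), of "[]" j q "[]"] Cons.prems(2,3) True by simp
    then have "pairD n i (wt (Dt q)) = 2" using pair_Dt[OF i] Cons.prems(2) by simp
    then show ?thesis using E IH True by (simp add: tens_eps_def)
  next
    case False
    then show ?thesis using E IH by (simp add: tens_eps_def)
  qed
qed

lemma fstar_seq_Dt: "set js \<subseteq> {1..n} \<Longrightarrow> fstar_seq f star js binf = Some (star (Dt js))"
proof (induction js rule: rev_induct)
  case Nil then show ?case by (simp add: fstar_seq_def Dt_Nil star_binf)
next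
  case (snoc x xs)
  have x: "x \<in> {1..n}" using snoc.prems by auto
  have "fstar_seq f star (xs @ [x]) binf = Option.bind (fstar_seq f star xs binf) (fstar f star x)"
    by (simp add: fstar_seq_def)
  also have "\<dots> = map_option star (f x (Dt xs))" using snoc by (simp add: fstar_def star_star)
  also have "f x (Dt xs) = Some (Dt (xs@[x]))" using f_Some[OF x, of "Dt xs"] by (simp add: Dt_snoc)
  finally show ?case by simp
qed

lemma f_seq_Dt: "set js \<subseteq> {1..n} \<Longrightarrow> f_seq f js binf = Some (Dt (rev js))"
proof (induction js)
  case Nil then show ?case by (simp add: f_seq_def Dt_Nil)
next
  case (Cons x xs)
  have x: "x \<in> {1..n}" using Cons.prems by auto
  have "f_seq f (x # xs) binf = Option.bind (f_seq f xs binf) (f x)" by (simp add: f_seq_def)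
  then show ?case using Cons f_Some[OF x, of "Dt (rev xs)"] by (simp add: Dt_snoc)
qed

lemma claim1: "length v = n \<Longrightarrow> set js \<subseteq> {1..n} \<Longrightarrow> spin_fseq n js v \<noteq> None \<Longrightarrow>
  Phi Psi js (star (Dt js)) = (binf, replicate (length js) (-1))"
proof (induction js rule: rev_induct)
  case Nil then show ?case by (simp add: Dt_Nil star_binf)
next
  case (snoc i js)
  have i: "i \<in> {1..n}" using snoc.prems by auto
  have pre: "spin_fseq n js v \<noteq> None" using snoc.prems(3) by (cases "spin_fseq n js v") (auto simp: spin_fseq_append)
  have e0: "eps i (Dt js) = 0" using lemA[OF snoc.prems] .
  define b where "b = star (Dt (js @ [i]))"
  have sb: "star b = the (f i (Dt js))" by (simp add: b_def star_star Dt_snoc)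
  have e1: "eps i (star b) = 1" using f_prop[OF i f_Some[OF i, of "Dt js"]] e0 sb by simp
  have ps: "snd (Psi i b) = -1" using Psi_star[OF i, of b] e1 by simp
  have "f i (star (fst (Psi i b))) = Some (star b)" using Psi_star[OF i, of b] e1 by (simp add: iter_opt_def)
  moreover have A: "f i (Dt js) = Some (star b)" using f_Some[OF i, of "Dt js"] sb by simp
  ultimately have "star (fst (Psi i b)) = Dt js" using f_inj[OF i _ A] by blast
  then have pf: "fst (Psi i b) = star (Dt js)" using star_star[of "fst (Psi i b)"] by simp
  show ?case using snoc.IH[OF snoc.prems(1) _ pre] snoc.prems(2) ps pf
    by (simp add: Phi_snoc b_def[symmetric] replicate_append_same)
qed

lemma claim2: "length v = n \<Longrightarrow> set js \<subseteq> {1..n} \<Longrightarrow> spin_fseq n js v \<noteq> None \<Longrightarrow>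
  Phi Psi js (Dt (rev js)) = (binf, replicate (length js) (-1))"
proof (induction js rule: rev_induct)
  case Nil then show ?case by (simp add: Dt_Nil)
next
  case (snoc i js)
  have i: "i \<in> {1..n}" using snoc.prems by auto
  have pre: "spin_fseq n js v \<noteq> None" using snoc.prems(3) by (cases "spin_fseq n js v") (auto simp: spin_fseq_append)
  have cond: "\<forall>a b. rev js = a @ i # b \<longrightarrow> sum_list (map (cartanD n i) a) \<le> -2"
  proof (intro allI impI)
    fix a b assume "rev js = a @ i # b"
    then have "js = rev (a @ i # b)" by (metis rev_rev_ident)
    then have "js = rev b @ i # rev a" by simp
    then have "sum_list (map (cartanD n i) (rev a)) = -2"
      using K[OF n4 snoc.prems(1), of "rev b" i "rev a" "[]"] snoc.prems(2,3) by simp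
    then show "sum_list (map (cartanD n i) a) \<le> -2" by (simp add: rev_map[symmetric])
  qed
  have P: "Psi i (Dt (i # rev js)) = (Dt (rev js), -1)" using Psi_step[OF i _ cond] snoc.prems(2) by simp
  show ?case using snoc.IH[OF snoc.prems(1) _ pre] snoc.prems(2) P by (simp add: Phi_snoc replicate_append_same)
qed

end

theorem proposition10p1:
  fixes n :: nat
    and wt :: "'b \<Rightarrow> nat \<Rightarrow> int"
    and eps phi :: "nat \<Rightarrow> 'b \<Rightarrow> int"
    and e f :: "nat \<Rightarrow> 'b \<Rightarrow> 'b option"
    and binf :: 'b
    and star :: "'b \<Rightarrow> 'b"
    and Psi :: "nat \<Rightarrow> 'b \<Rightarrow> 'b \<times> int"
    and bw :: "bool list"
    and js :: "nat list"
  assumes "n \<ge> 4"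
    and "is_Binf_D n wt eps phi e f binf star Psi"
    and "bw = replicate (n - 1) True @ [False] \<or> bw = replicate n True"
    and "set js \<subseteq> {1..n}"
    and "spin_fseq n js bw \<noteq> None"
  shows "map_option (Phi Psi js) (fstar_seq f star js binf) = Some (binf, replicate (length js) (-1))
       \<and> map_option (Phi Psi js) (f_seq f js binf) = Some (binf, replicate (length js) (-1))"
proof -
  interpret BD n wt eps phi e f binf star Psi using assms(1,2) by unfold_locales
  have l: "length bw = n" using assms(1,3) by auto
  show ?thesis using fstar_seq_Dt[OF assms(4)] f_seq_Dt[OF assms(4)]
      claim1[OF l assms(4,5)] claim2[OF l assms(4,5)] by simp
qed

end
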